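(* Let $N\ge1$, $i\in\langle N\rangle$ and let $u$ be a word over $\langle N\rangle$ with $|u|\ge2$. Then the antipode of the right Lagrange Hopf algebra $\mathcal R^N$ satisfies \[ S_{\mathcal R}(Y_u^i)=\sum_{T\in\mathbf{RT}_u^i}(-1)^{\mathbf v(T)}\,\Lambda_{\downarrow r}(T). \]
   Context: Let $\langle N\rangle=\{1,\dots,N\}$, $|u|$ the length of a word $u$. The interval partition Hopf algebra $\mathcal H=\mathcal H^N$ is, as an algebra, the free unital associative complex algebra on generators $Y_u^i$ ($i\in\langle N\rangle$, $|u|\ge 2$); set $Y_j^i=\delta_{ij}1$ for letters $i,j$. Its counit $\varepsilon$ is the algebra homomorphism with $\varepsilon(Y_u^i)=0$, and its comultiplication is the algebra homomorphism $\Delta$ with $\Delta(Y_u^i)=\sum_{q=1}^{p}\sum_{(C_1,\dots,C_q)}\sum_{v\in\langle N\rangle^q} Y_{u|C_1}^{v(1)}\cdots Y_{u|C_q}^{v(q)}\otimes Y_v^i$ ($p=|u|$, the middle sum over all partitions of $\{1,\dots,p\}$ into $q$ nonempty consecutive intervals $C_1<\dots<C_q$, $u|C_k$ the subword indexed by $C_k$). It has an antipode $S_{\mathcal H}$. Let $\mathbf t$ be the algebra anti-automorphism of $\mathcal H$ fixing each generator: $\mathbf t(Y_{u_1}^{i_1}\cdots Y_{u_n}^{i_n})=Y_{u_n}^{i_n}\cdots Y_{u_1}^{i_1}$. The right Lagrange Hopf algebra $\mathcal R^N$ is $\mathcal H$ with multiplication $\mathbf t\circ m\circ(\mathbf t\otimes\mathbf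 t)$, comultiplication $(\mathbf t\otimes\mathbf t)\circ\Delta\circ\mathbf t$, the same unit and counit, and antipode $S_{\mathcal R}=\mathbf t S_{\mathcal H}\mathbf t$. Trees: a colored planar tree is a finite rooted tree with linearly ordered children at each vertex and a color $c(x)\in\langle N\rangle$ at each vertex, up to isomorphism. Leaves have no children; a tree is reduced if every non-leaf vertex has at least two children. $\mathbf{RT}_u^i$: reduced colored planar trees with root colored $i$ and leaves, read left to right, colored $u(1),\dots,u(p)$. For a non-leaf $x$ with children $y_1<\dots<y_k$, $Y(x)=Y^{c(x)}_{c(y_1)\cdots c(y_k)}$. $\mathbf v(T)$ = number of non-leaf vertices. $\Lambda_{\downarrow r}(T)=Y(z_1)\cdots Y(z_r)$ where $z_1,\dots,z_r$ are the non-leaf vertices listed in preorder with children visited from left to right (root first; after a vertex, the subtrees of its children are traversed from the leftmost to the rightmost child). *)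

theory Defs
  imports Complex_Main "HOL-Library.Function_Algebras"
begin

text \<open>A generator Y_u^i is encoded as the pair (i,u); a monomial is a list of
generators; an element of the algebra is its coefficient function on monomials
(elements of H are the finitely supported ones supported on valid monomials).\<close>

type_synonym gen = "nat \<times> nat list"
type_synonym mono = "gen list"
type_synonym elt = "mono \<Rightarrow> complex"
type_synonym telt = "mono \<times> mono \<Rightarrow> complex"

definition valid_gen :: "nat \<Rightarrow> gen \<Rightarrow> bool" where
  "valid_gen N g \<longleftrightarrow> fst g \<in> {1..N} \<and> length (snd g) \<ge> 2 \<and> set (snd g) \<subseteq> {1..N}"

definition valid_mono :: "nat \<Rightarrow> mono \<Rightarrow> bool" where
  "valid_mono N m \<longleftrightarrow> (\<forall>g\<in>set m. valid_gen N g)"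

definition in_H :: "nat \<Rightarrow> elt \<Rightarrow> bool" where
  "in_H N a \<longleftrightarrow> finite {m. a m \<noteq> 0} \<and> (\<forall>m. a m \<noteq> 0 \<longrightarrow> valid_mono N m)"

definition basis :: "mono \<Rightarrow> elt" where
  "basis m = (\<lambda>m'. if m' = m then 1 else 0)"

definition H_one :: elt where
  "H_one = basis []"

definition H_smult :: "complex \<Rightarrow> elt \<Rightarrow> elt" where
  "H_smult c a = (\<lambda>m. c * a m)"

definition H_mult :: "elt \<Rightarrow> elt \<Rightarrow> elt" where
  "H_mult a b = (\<lambda>m. \<Sum>k\<le>length m. a (take k m) * b (drop k m))"

definition H_prod :: "elt list \<Rightarrow> elt" where
  "H_prod xs = foldr H_mult xs H_one"

text \<open>Y_u^i, with the convention Y_j^i = delta_ij 1 for letters j.\<close>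
definition Y :: "gen \<Rightarrow> elt" where
  "Y g = (if length (snd g) \<ge> 2 then basis [g]
          else if length (snd g) = 1 then (if fst g = hd (snd g) then H_one else 0)
          else 0)"

definition counit :: "mono \<Rightarrow> complex" where
  "counit m = (if m = [] then 1 else 0)"

definition tmap :: "elt \<Rightarrow> elt" where
  "tmap a = (\<lambda>m. a (rev m))"

definition linext :: "(mono \<Rightarrow> elt) \<Rightarrow> elt \<Rightarrow> elt" where
  "linext S a = (\<lambda>m. \<Sum>w\<in>{w. a w \<noteq> 0}. a w * S w m)"

definition tensor :: "elt \<Rightarrow> elt \<Rightarrow> telt" where
  "tensor a b = (\<lambda>(x, y). a x * b y)"

definition T_mult :: "telt \<Rightarrow> telt \<Rightarrow> telt" where
  "T_mult A B = (\<lambda>(x, y). \<Sum>k\<le>length x. \<Sum>l\<le>length y.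
      A (take k x, take l y) * B (drop k x, drop l y))"

text \<open>Partitions of {1..p} into consecutive nonempty intervals, represented by
the corresponding decomposition of u into consecutive nonempty subwords.\<close>
definition splits :: "nat list \<Rightarrow> nat list list set" where
  "splits u = {ws. concat ws = u \<and> [] \<notin> set ws}"

definition words :: "nat \<Rightarrow> nat \<Rightarrow> nat list set" where
  "words N q = {v. length v = q \<and> set v \<subseteq> {1..N}}"

definition Delta_gen :: "nat \<Rightarrow> gen \<Rightarrow> telt" where
  "Delta_gen N g = (\<Sum>ws\<in>splits (snd g). \<Sum>v\<in>words N (length ws).
       tensor (H_prod (map Y (zip v ws))) (Y (fst g, v)))"

fun Delta :: "nat \<Rightarrow> mono \<Rightarrow> telt" where
  "Delta N [] = tensor H_one H_one"
| "Delta N (g # gs) = T_mult (Delta_gen N g) (Delta N gs)"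

definition is_antipode_H :: "nat \<Rightarrow> (mono \<Rightarrow> elt) \<Rightarrow> bool" where
  "is_antipode_H N S \<longleftrightarrow> (\<forall>w. valid_mono N w \<longrightarrow>
      in_H N (S w) \<and>
      (\<Sum>p\<in>{p. Delta N w p \<noteq> 0}. H_smult (Delta N w p) (H_mult (S (fst p)) (basis (snd p))))
         = H_smult (counit w) H_one \<and>
      (\<Sum>p\<in>{p. Delta N w p \<noteq> 0}. H_smult (Delta N w p) (H_mult (basis (fst p)) (S (snd p))))
         = H_smult (counit w) H_one)"

text \<open>Antipode of the right Lagrange Hopf algebra: S_R = t S_H t.\<close>
definition antipode_R :: "(mono \<Rightarrow> elt) \<Rightarrow> elt \<Rightarrow> elt" where
  "antipode_R S a = tmap (linext S (tmap a))"

datatype ctree = Node nat "ctree list"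

fun color :: "ctree \<Rightarrow> nat" where
  "color (Node c ts) = c"

fun leaf_colors :: "ctree \<Rightarrow> nat list" where
  "leaf_colors (Node c ts) = (if ts = [] then [c] else concat (map leaf_colors ts))"

fun reduced :: "ctree \<Rightarrow> bool" where
  "reduced (Node c ts) = ((ts = [] \<or> length ts \<ge> 2) \<and> (\<forall>t\<in>set ts. reduced t))"

fun colors_in :: "nat \<Rightarrow> ctree \<Rightarrow> bool" where
  "colors_in N (Node c ts) = (c \<in> {1..N} \<and> (\<forall>t\<in>set ts. colors_in N t))"

definition RT :: "nat \<Rightarrow> nat \<Rightarrow> nat list \<Rightarrow> ctree set" where
  "RT N i u = {T. reduced T \<and> colors_in N T \<and> color T = i \<and> leaf_colors T = u}"

fun preorder_gens :: "ctree \<Rightarrow> gen list" where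
  "preorder_gens (Node c ts) =
     (if ts = [] then [] else (c, map color ts) # concat (map preorder_gens ts))"

fun nonleaf_count :: "ctree \<Rightarrow> nat" where
  "nonleaf_count (Node c ts) = (if ts = [] then 0 else 1 + sum_list (map nonleaf_count ts))"

definition Lambda_down :: "ctree \<Rightarrow> elt" where
  "Lambda_down T = H_prod (map Y (preorder_gens T))"

end

theory Submission
  imports Defs
begin


lemma sum_fun_apply: "(\<Sum>k\<in>K. F k) x = (\<Sum>k\<in>K. F k x)"
  by (induction K rule: infinite_finite_induct) auto

lemma basis_apply: "basis m m' = (if m' = m then 1 else 0)"
  by (simp add: basis_def)

definition PP :: "'a list \<Rightarrow> ('a list \<times> 'a list) set" where
  "PP m = {p. fst p @ snd p = m}"

lemma PP_img: "PP m = (\<lambda>k. (take k m, drop k m)) ` {..length m}"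
proof -
  have "p \<in> (\<lambda>k. (take k m, drop k m)) ` {..length m}" if "fst p @ snd p = m" for p
    using that by (intro image_eqI[of _ _ "length (fst p)"]) auto
  then show ?thesis unfolding PP_def by auto
qed

lemma PP_finite[simp]: "finite (PP m)"
  by (simp add: PP_img)

lemma sum_PP: "(\<Sum>k\<le>length m. f (take k m) (drop k m)) = (\<Sum>p\<in>PP m. f (fst p) (snd p))"
proof -
  have "inj_on (\<lambda>k. (take k m, drop k m)) {..length m}"
    by (rule inj_onI) (metis atMost_iff fst_conv length_take min.absorb2)
  then show ?thesis by (simp add: PP_img sum.reindex)
qed

lemma H_mult_alt: "H_mult a b m = (\<Sum>p\<in>PP m. a (fst p) * b (snd p))"
  unfolding H_mult_def using sum_PP[where m=m and f="\<lambda>x y. a x * b y"] by simp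

lemma H_mult_assoc: "H_mult (H_mult a b) c = H_mult a (H_mult b c)"
proof
  fix m
  have "H_mult (H_mult a b) c m = (\<Sum>p\<in>PP m. \<Sum>q\<in>PP (fst p). a (fst q) * b (snd q) * c (snd p))"
    by (simp add: H_mult_alt sum_distrib_right)
  also have "\<dots> = (\<Sum>(p,q)\<in>Sigma (PP m) (\<lambda>p. PP (fst p)). a (fst q) * b (snd q) * c (snd p))"
    by (rule sum.Sigma) auto
  also have "\<dots> = (\<Sum>(p,q)\<in>Sigma (PP m) (\<lambda>p. PP (snd p)). a (fst p) * (b (fst q) * c (snd q)))"
    by (rule sum.reindex_bij_witness[where i="\<lambda>(p,q). ((fst p @ fst q, snd q), (fst p, fst q))"
          and j="\<lambda>(p,q). ((fst q, snd q @ snd p), (snd q, snd p))"]) (auto simp: PP_def)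
  also have "\<dots> = (\<Sum>p\<in>PP m. \<Sum>q\<in>PP (snd p). a (fst p) * (b (fst q) * c (snd q)))"
    by (rule sum.Sigma[symmetric]) auto
  also have "\<dots> = H_mult a (H_mult b c) m"
    by (simp add: H_mult_alt sum_distrib_left)
  finally show "H_mult (H_mult a b) c m = H_mult a (H_mult b c) m" .
qed

lemma H_mult_basis: "H_mult (basis x) (basis y) = basis (x @ y)"
proof
  fix m
  have "H_mult (basis x) (basis y) m = (\<Sum>p\<in>PP m. if p = (x,y) then 1 else 0)"
    unfolding H_mult_alt by (rule sum.cong) (auto simp: basis_apply)
  also have "\<dots> = basis (x @ y) m" using sum.delta[OF PP_finite[of m], of "(x,y)" "\<lambda>_. 1"] by (auto simp: basis_apply PP_def)
  finally show "H_mult (basis x) (basis y) m = basis (x @ y) m" .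
qed

lemma H_mult_one_left[simp]: "H_mult H_one a = a"
proof
  fix m
  have "H_mult H_one a m = (\<Sum>p\<in>PP m. if p = ([],m) then a m else 0)"
    unfolding H_mult_alt H_one_def by (rule sum.cong) (auto simp: basis_apply PP_def)
  also have "\<dots> = a m" using sum.delta[OF PP_finite[of m], of "([],m)" "\<lambda>_. a m"] by (simp add: PP_def)
  finally show "H_mult H_one a m = a m" .
qed

lemma H_mult_one_right[simp]: "H_mult a H_one = a"
proof
  fix m
  have "H_mult a H_one m = (\<Sum>p\<in>PP m. if p = (m,[]) then a m else 0)"
    unfolding H_mult_alt H_one_def by (rule sum.cong) (auto simp: basis_apply PP_def)
  also have "\<dots> = a m" using sum.delta[OF PP_finite[of m], of "(m,[])" "\<lambda>_. a m"] by (simp add: PP_def)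
  finally show "H_mult a H_one m = a m" .
qed

lemma H_mult_zero_left[simp]: "H_mult 0 a = 0" and H_mult_zero_right[simp]: "H_mult a 0 = 0"
  by (auto simp: H_mult_def fun_eq_iff)

lemma H_mult_sum_left: "H_mult (\<Sum>k\<in>K. F k) b = (\<Sum>k\<in>K. H_mult (F k) b)"
  by (auto simp: H_mult_def fun_eq_iff sum_fun_apply sum_distrib_right intro: sum.swap)

lemma H_mult_sum_right: "H_mult a (\<Sum>k\<in>K. F k) = (\<Sum>k\<in>K. H_mult a (F k))"
  by (auto simp: H_mult_def fun_eq_iff sum_fun_apply sum_distrib_left intro: sum.swap)

lemma H_mult_smult_left: "H_mult (H_smult c a) b = H_smult c (H_mult a b)"
  by (auto simp: H_mult_def H_smult_def fun_eq_iff sum_distrib_left mult.assoc)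

lemma H_mult_smult_right: "H_mult a (H_smult c b) = H_smult c (H_mult a b)"
  by (auto simp: H_mult_def H_smult_def fun_eq_iff sum_distrib_left mult.left_commute)

lemma H_smult_sum: "H_smult c (\<Sum>k\<in>K. F k) = (\<Sum>k\<in>K. H_smult c (F k))"
  by (auto simp: H_smult_def fun_eq_iff sum_fun_apply sum_distrib_left)

lemma H_smult_0[simp]: "H_smult 0 a = 0" "H_smult c 0 = 0" "H_smult 1 a = a"
  by (auto simp: H_smult_def fun_eq_iff)

lemma H_smult_smult: "H_smult c (H_smult d a) = H_smult (c * d) a"
  by (auto simp: H_smult_def fun_eq_iff)

lemma H_prod_simps[simp]: "H_prod [] = H_one" "H_prod (x # xs) = H_mult x (H_prod xs)"
  by (auto simp: H_prod_def)

lemma H_prod_append: "H_prod (xs @ ys) = H_mult (H_prod xs) (H_prod ys)"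
  by (induction xs) (auto simp: H_mult_assoc)



definition fs :: "('a \<Rightarrow> complex) \<Rightarrow> bool" where
  "fs A \<longleftrightarrow> finite {p. A p \<noteq> 0}"

definition LL :: "telt \<Rightarrow> (mono \<times> mono \<Rightarrow> elt) \<Rightarrow> elt" where
  "LL A f = (\<Sum>p\<in>{p. A p \<noteq> 0}. H_smult (A p) (f p))"

definition basis2 :: "mono \<times> mono \<Rightarrow> telt" where
  "basis2 p = (\<lambda>q. if q = p then 1 else 0)"

lemma LL_superset:
  assumes "finite P" "{p. A p \<noteq> 0} \<subseteq> P"
  shows "LL A f = (\<Sum>p\<in>P. H_smult (A p) (f p))"
  unfolding LL_def using assms by (intro sum.mono_neutral_left) auto

lemma H_smult_sum_left: "H_smult (\<Sum>k\<in>K. c k) a = (\<Sum>k\<in>K. H_smult (c k) a)"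
  by (auto simp: H_smult_def fun_eq_iff sum_fun_apply sum_distrib_right)

lemma T_mult_alt:
  "T_mult A B (x,y) = (\<Sum>a\<in>PP x. \<Sum>b\<in>PP y. A (fst a, fst b) * B (snd a, snd b))"
proof -
  have "T_mult A B (x,y) = (\<Sum>k\<le>length x. \<Sum>l\<le>length y.
      A (take k x, take l y) * B (drop k x, drop l y))" by (simp add: T_mult_def)
  also have "\<dots> = (\<Sum>k\<le>length x. \<Sum>b\<in>PP y. A (take k x, fst b) * B (drop k x, snd b))"
    by (rule sum.cong[OF refl], rule sum_PP[where f="\<lambda>c d. A (take _ x, c) * B (drop _ x, d)"])
  also have "\<dots> = (\<Sum>a\<in>PP x. \<Sum>b\<in>PP y. A (fst a, fst b) * B (snd a, snd b))"
    by (rule sum_PP[where f="\<lambda>c d. \<Sum>b\<in>PP y. A (c, fst b) * B (d, snd b)"])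
  finally show ?thesis .
qed

definition hcat :: "(mono \<times> mono) \<times> (mono \<times> mono) \<Rightarrow> mono \<times> mono" where
  "hcat pp = (fst (fst pp) @ fst (snd pp), snd (fst pp) @ snd (snd pp))"

lemma T_mult_fiber:
  assumes "fs A" "fs B"
  shows "T_mult A B q = (\<Sum>pp\<in>{pp\<in>{p. A p \<noteq> 0} \<times> {p. B p \<noteq> 0}. hcat pp = q}. A (fst pp) * B (snd pp))"
proof -
  obtain x y where q: "q = (x,y)" by fastforce
  have "T_mult A B q = (\<Sum>ab\<in>PP x \<times> PP y. A (fst (fst ab), fst (snd ab)) * B (snd (fst ab), snd (snd ab)))"
    unfolding q T_mult_alt by (simp add: sum.cartesian_product split_def)
  also have "\<dots> = (\<Sum>pp\<in>{pp\<in>{p. A p \<noteq> 0} \<times> {p. B p \<noteq> 0}. hcat pp = q}. A (fst pp) * B (snd pp))"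
    apply (rule sum.reindex_bij_witness_not_neutral[where
          S'="{ab\<in>PP x \<times> PP y. A (fst (fst ab), fst (snd ab)) * B (snd (fst ab), snd (snd ab)) = 0}"
          and T'="{}"
          and j="\<lambda>ab. ((fst (fst ab), fst (snd ab)), (snd (fst ab), snd (snd ab)))"
          and i="\<lambda>ab. ((fst (fst ab), fst (snd ab)), (snd (fst ab), snd (snd ab)))"])
    subgoal by (rule finite_subset[of _ "PP x \<times> PP y"]) auto
    using assms by (auto simp: PP_def hcat_def q)
  finally show ?thesis .
qed

lemma LL_T_mult:
  assumes "fs A" "fs B"
  shows "LL (T_mult A B) f = (\<Sum>p\<in>{p. A p \<noteq> 0}. \<Sum>p'\<in>{p. B p \<noteq> 0}.
           H_smult (A p * B p') (f (fst p @ fst p', snd p @ snd p')))"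
proof -
  let ?S = "{p. A p \<noteq> 0} \<times> {p. B p \<noteq> 0}"
  have finS: "finite ?S" using assms by (simp add: fs_def)
  have sub: "{q. T_mult A B q \<noteq> 0} \<subseteq> hcat ` ?S"
  proof
    fix q assume "q \<in> {q. T_mult A B q \<noteq> 0}"
    then have "(\<Sum>pp\<in>{pp\<in>?S. hcat pp = q}. A (fst pp) * B (snd pp)) \<noteq> 0"
      using T_mult_fiber[OF assms] by simp
    then obtain pp where "pp \<in> {pp\<in>?S. hcat pp = q}"
      by (metis (no_types, lifting) empty_iff sum.empty subsetI subset_antisym)
    then show "q \<in> hcat ` ?S" by auto
  qed
  have "LL (T_mult A B) f = (\<Sum>q\<in>hcat ` ?S. H_smult (T_mult A B q) (f q))"
    using finS sub by (intro LL_superset) auto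
  also have "\<dots> = (\<Sum>q\<in>hcat ` ?S. \<Sum>pp\<in>{pp\<in>?S. hcat pp = q}. H_smult (A (fst pp) * B (snd pp)) (f (hcat pp)))"
    by (rule sum.cong[OF refl]) (auto simp: T_mult_fiber[OF assms] H_smult_sum_left intro!: sum.cong)
  also have "\<dots> = (\<Sum>pp\<in>?S. H_smult (A (fst pp) * B (snd pp)) (f (hcat pp)))"
    using finS by (intro sum.group) auto
  also have "\<dots> = (\<Sum>p\<in>{p. A p \<noteq> 0}. \<Sum>p'\<in>{p. B p \<noteq> 0}.
           H_smult (A p * B p') (f (fst p @ fst p', snd p @ snd p')))"
    by (simp add: sum.cartesian_product hcat_def split_def)
  finally show ?thesis .
qed



lemma fs_basis[simp]: "fs (basis m)"
  and fs_basis2[simp]: "fs (basis2 p)"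
  by (auto simp: fs_def basis_def basis2_def)

lemma fs_zero[simp]: "fs (0::'a \<Rightarrow> complex)"
  unfolding fs_def by simp

lemma fs_sum: "finite K \<Longrightarrow> (\<And>k. k \<in> K \<Longrightarrow> fs (F k)) \<Longrightarrow> fs (\<Sum>k\<in>K. F k)"
proof (induction K rule: finite_induct)
  case empty then show ?case by (simp add: fs_def)
next
  case (insert k K)
  have "{p. (F k + sum F K) p \<noteq> 0} \<subseteq> {p. F k p \<noteq> 0} \<union> {p. sum F K p \<noteq> 0}" by auto
  with insert show ?case by (auto simp: fs_def intro: finite_subset)
qed

lemma T_mult_supp:
  assumes "fs A" "fs B"
  shows "{q. T_mult A B q \<noteq> 0} \<subseteq> hcat ` ({p. A p \<noteq> 0} \<times> {p. B p \<noteq> 0})"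
proof
  let ?S = "{p. A p \<noteq> 0} \<times> {p. B p \<noteq> 0}"
  fix q assume "q \<in> {q. T_mult A B q \<noteq> 0}"
  then have "(\<Sum>pp\<in>{pp\<in>?S. hcat pp = q}. A (fst pp) * B (snd pp)) \<noteq> 0"
    using T_mult_fiber[OF assms] by simp
  then obtain pp where "pp \<in> {pp\<in>?S. hcat pp = q}"
    by (metis (no_types, lifting) empty_iff sum.empty subsetI subset_antisym)
  then show "q \<in> hcat ` ?S" by auto
qed

lemma fs_T_mult: "fs A \<Longrightarrow> fs B \<Longrightarrow> fs (T_mult A B)"
  using T_mult_supp unfolding fs_def by (meson finite_SigmaI finite_imageI finite_subset)

lemma LL_zero[simp]: "LL 0 f = 0" unfolding LL_def by simp

lemma LL_basis2[simp]: "LL (basis2 p) f = f p"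
proof -
  have "{q. basis2 p q \<noteq> 0} = {p}" by (auto simp: basis2_def)
  then show ?thesis by (simp add: LL_def basis2_def)
qed

lemma LL_add: "fs A \<Longrightarrow> fs B \<Longrightarrow> LL (A + B) f = LL A f + LL B f"
proof -
  assume a: "fs A" "fs B"
  let ?P = "{p. A p \<noteq> 0} \<union> {p. B p \<noteq> 0}"
  have fin: "finite ?P" using a by (simp add: fs_def)
  have "LL (A + B) f = (\<Sum>p\<in>?P. H_smult ((A + B) p) (f p))"
    using fin by (intro LL_superset) auto
  also have "\<dots> = (\<Sum>p\<in>?P. H_smult (A p) (f p)) + (\<Sum>p\<in>?P. H_smult (B p) (f p))"
    by (simp add: sum.distrib[symmetric] H_smult_def fun_eq_iff sum_fun_apply distrib_right)
  also have "\<dots> = LL A f + LL B f"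
    using fin by (simp add: LL_superset[OF fin, of A] LL_superset[OF fin, of B])
  finally show ?thesis .
qed

lemma LL_sum: "finite K \<Longrightarrow> (\<And>k. k \<in> K \<Longrightarrow> fs (F k)) \<Longrightarrow> LL (\<Sum>k\<in>K. F k) f = (\<Sum>k\<in>K. LL (F k) f)"
proof (induction K rule: finite_induct)
  case empty then show ?case by (simp add: LL_def)
next
  case (insert k K)
  have "LL (\<Sum>k\<in>insert k K. F k) f = LL (F k + sum F K) f"
    by (simp only: sum.insert[OF insert(1,2)])
  also have "\<dots> = LL (F k) f + LL (sum F K) f"
    by (rule LL_add) (use insert in \<open>auto intro: fs_sum\<close>)
  also have "\<dots> = (\<Sum>k\<in>insert k K. LL (F k) f)"
  proof -
    have ih: "LL (sum F K) f = (\<Sum>k\<in>K. LL (F k) f)" using insert by auto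
    show ?thesis by (simp only: sum.insert[OF insert(1,2)] ih)
  qed
  finally show ?case .
qed

lemma tensor_basis: "tensor (basis x) (basis y) = basis2 (x,y)"
  by (auto simp: tensor_def basis_def basis2_def fun_eq_iff)

lemma tensor_zero[simp]: "tensor 0 b = 0" "tensor a 0 = 0"
  by (auto simp: tensor_def fun_eq_iff)

definition long :: "gen \<Rightarrow> bool" where "long g \<longleftrightarrow> 2 \<le> length (snd g)"

definition cnd :: "gen list \<Rightarrow> bool" where
  "cnd gs \<longleftrightarrow> (\<forall>g\<in>set gs. \<not> long g \<longrightarrow> snd g = [fst g])"

lemma Y_alt: "Y g = (if long g then basis [g] else if snd g = [fst g] then H_one else 0)"
  unfolding Y_def long_def by (cases "snd g") auto

lemma HY: "H_prod (map Y gs) = (if cnd gs then basis (filter long gs) else 0)"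
proof (induction gs)
  case Nil then show ?case by (simp add: cnd_def H_one_def)
next
  case (Cons g gs)
  then show ?case by (auto simp: Y_alt cnd_def H_mult_basis)
qed

definition wt :: "mono \<Rightarrow> nat" where "wt m = sum_list (map (\<lambda>g. length (snd g) - 1) m)"

lemma wt_simps[simp]: "wt [] = 0" "wt (g # m) = (length (snd g) - 1) + wt m" "wt (a @ b) = wt a + wt b"
  by (auto simp: wt_def)

lemma wt_filter_long: "wt (filter long gs) = wt gs"
  by (induction gs) (auto simp: long_def)

lemma wt_zip: "length v = length ws \<Longrightarrow> [] \<notin> set ws \<Longrightarrow> wt (zip v ws) + length ws = length (concat ws)"
proof (induction ws arbitrary: v)
  case Nil then show ?case by simp
next
  case (Cons w ws)
  then obtain a v' where "v = a # v'" by (cases v) auto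
  with Cons show ?case by (cases w) auto
qed

lemma valid_mono_append[simp]: "valid_mono N (a @ b) \<longleftrightarrow> valid_mono N a \<and> valid_mono N b"
  and valid_mono_Nil[simp]: "valid_mono N []"
  and valid_mono_Cons[simp]: "valid_mono N (g # m) \<longleftrightarrow> valid_gen N g \<and> valid_mono N m"
  by (auto simp: valid_mono_def)

lemma splitsD: "ws \<in> splits u \<Longrightarrow> concat ws = u \<and> [] \<notin> set ws"
  by (simp add: splits_def)

lemma length_concat_ge: "[] \<notin> set ws \<Longrightarrow> length ws \<le> length (concat ws)"
proof (induction ws)
  case (Cons w ws) then show ?case by (cases w) auto
qed simp

lemma splits_length: "ws \<in> splits u \<Longrightarrow> length ws \<le> length u"
  unfolding splits_def using length_concat_ge[of ws] by auto

lemma length_mem_concat: "w \<in> set ws \<Longrightarrow> length w \<le> length (concat ws)"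
  by (induction ws) auto

lemma splits_finite: "finite (splits u)"
proof -
  have "splits u \<subseteq> {ws. set ws \<subseteq> {w. set w \<subseteq> set u \<and> length w \<le> length u} \<and> length ws \<le> length u}"
    using splits_length length_mem_concat by (fastforce simp: splits_def)
  moreover have "finite {w. set w \<subseteq> set u \<and> length w \<le> length u}"
    by (rule finite_lists_length_le) simp
  then have "finite {ws. set ws \<subseteq> {w. set w \<subseteq> set u \<and> length w \<le> length u} \<and> length ws \<le> length u}"
    by (rule finite_lists_length_le)
  ultimately show ?thesis by (rule finite_subset)
qed

lemma words_finite: "finite (words N q)"
  unfolding words_def using finite_lists_length_eq[of "{1..N}" q] by (simp add: conj_commute)

definition tm :: "nat \<Rightarrow> nat list list \<Rightarrow> nat list \<Rightarrow> telt" where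
  "tm i ws v = tensor (H_prod (map Y (zip v ws))) (Y (i, v))"

lemma tm_alt: "tm i ws v = (if cnd (zip v ws) \<and> (long (i,v) \<or> v = [i]) then
   basis2 (filter long (zip v ws), if long (i,v) then [(i,v)] else []) else 0)"
  unfolding tm_def HY Y_alt by (auto simp: tensor_basis H_one_def)

lemma Delta_gen_alt: "Delta_gen N (i,u) = (\<Sum>ws\<in>splits u. \<Sum>v\<in>words N (length ws). tm i ws v)"
  by (simp add: Delta_gen_def tm_def)

lemma fs_tm[simp]: "fs (tm i ws v)" by (simp add: tm_alt)

lemma fs_Delta_gen: "fs (Delta_gen N g)"
  by (cases g) (auto simp: Delta_gen_alt splits_finite words_finite intro!: fs_sum)

lemma fs_Delta: "fs (Delta N w)"
  by (induction w) (auto simp: fs_Delta_gen tensor_basis H_one_def intro!: fs_T_mult)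

definition Good :: "nat \<Rightarrow> mono \<Rightarrow> mono \<times> mono \<Rightarrow> bool" where
  "Good N w p \<longleftrightarrow> valid_mono N (fst p) \<and> valid_mono N (snd p) \<and> wt (fst p) + wt (snd p) = wt w
     \<and> (snd p = [] \<longrightarrow> fst p = w)"

lemma sum_nonzero_ex: "(\<Sum>k\<in>K. f k) \<noteq> (0::'a::comm_monoid_add) \<Longrightarrow> \<exists>k\<in>K. f k \<noteq> 0"
  by (meson sum.neutral)

lemma Delta_gen_Good:
  assumes g: "valid_gen N (i,u)" and nz: "Delta_gen N (i,u) p \<noteq> 0"
  shows "Good N [(i,u)] p"
proof -
  from nz obtain ws v where ws: "ws \<in> splits u" and v: "v \<in> words N (length ws)"
    and t: "tm i ws v p \<noteq> 0"
    unfolding Delta_gen_alt sum_fun_apply by (auto dest!: sum_nonzero_ex)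
  from t have c: "cnd (zip v ws)" "long (i,v) \<or> v = [i]"
    and p: "p = (filter long (zip v ws), if long (i,v) then [(i,v)] else [])"
    by (auto simp: tm_alt basis2_def split: if_splits)
  have cu: "concat ws = u" "[] \<notin> set ws" using splitsD[OF ws] by auto
  have lv: "length v = length ws" "set v \<subseteq> {1..N}" using v by (auto simp: words_def)
  have gi: "i \<in> {1..N}" "2 \<le> length u" "set u \<subseteq> {1..N}" using g by (auto simp: valid_gen_def)
  have lws: "1 \<le> length ws" "length ws \<le> length u"
    using cu gi splits_length[OF ws] by (cases ws; auto)+
  have v1: "valid_mono N (fst p)"
  proof -
    have "valid_gen N g'" if "g' \<in> set (zip v ws)" "long g'" for g'
    proof -
      obtain a w where g': "g' = (a, w)" by fastforce
      have "a \<in> set v" "w \<in> set ws" using that g' by (auto dest: set_zip_leftD set_zip_rightD)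
      moreover have "set w \<subseteq> set u" using \<open>w \<in> set ws\<close> cu by auto
      ultimately have "a \<in> {1..N}" "set w \<subseteq> {1..N}" using lv gi by auto
      then show ?thesis using that g' by (auto simp: valid_gen_def long_def)
    qed
    then show ?thesis using p by (auto simp: valid_mono_def)
  qed
  have v2: "valid_mono N (snd p)"
    using p gi lv by (auto simp: valid_gen_def long_def)
  have w1: "wt (fst p) + length ws = length u"
    using p wt_zip[OF lv(1) cu(2)] cu by (simp add: wt_filter_long)
  have w2: "wt (snd p) = length v - 1"
    using p c by (auto simp: long_def)
  have w: "wt (fst p) + wt (snd p) = wt [(i,u)]"
    using w1 w2 lv lws by simp
  have "fst p = [(i,u)]" if "snd p = []"
  proof -
    have "v = [i]" using that p c by (auto split: if_splits)
    then have "length ws = 1" using lv by simp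
    then obtain w where "ws = [w]" by (cases ws) auto
    then have "ws = [u]" using cu by simp
    then show ?thesis using p \<open>v = [i]\<close> gi by (simp add: long_def)
  qed
  then show ?thesis using v1 v2 w by (simp add: Good_def)
qed

lemma tm_diag:
  assumes u: "2 \<le> length u" and ws: "ws \<in> splits u"
  shows "tm i ws v ([(i,u)], []) = (if ws = [u] \<and> v = [i] then 1 else 0)"
proof (cases "ws = [u] \<and> v = [i]")
  case True
  then show ?thesis using u by (simp add: tm_alt basis2_def cnd_def long_def)
next
  case False
  have "tm i ws v ([(i,u)], []) = 0"
  proof (rule ccontr)
    assume nz: "tm i ws v ([(i,u)], []) \<noteq> 0"
    then have c: "long (i,v) \<or> v = [i]" "[(i,u)] = filter long (zip v ws)"
      "[] = (if long (i,v) then [(i,v)] else [])"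
      by (auto simp: tm_alt basis2_def split: if_splits)
    then have v: "v = [i]" by (auto split: if_splits)
    from ws have cu: "concat ws = u" "[] \<notin> set ws" by (auto simp: splits_def)
    then obtain w rest where wsr: "ws = w # rest" using u by (cases ws) auto
    then have "w = u" using c v by (auto split: if_splits)
    then have "concat rest = []" using cu wsr by simp
    then have "rest = []" using cu wsr by (cases rest) auto
    then show False using False v wsr \<open>w = u\<close> by simp
  qed
  then show ?thesis using False by simp
qed

lemma Delta_gen_diag:
  assumes g: "valid_gen N (i,u)"
  shows "Delta_gen N (i,u) ([(i,u)], []) = 1"
proof -
  have gi: "i \<in> {1..N}" "2 \<le> length u" "set u \<subseteq> {1..N}" using g by (auto simp: valid_gen_def)
  have "Delta_gen N (i,u) ([(i,u)], []) =
      (\<Sum>ws\<in>splits u. if ws = [u] then (\<Sum>v\<in>words N (length ws). if v = [i] then 1 else 0) else 0)"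
    unfolding Delta_gen_alt sum_fun_apply
    by (rule sum.cong[OF refl]) (auto simp: tm_diag[OF gi(2)])
  also have "\<dots> = 1"
    using gi by (simp add: splits_finite words_finite) (auto simp: splits_def words_def)
  finally show ?thesis .
qed

lemma Delta_Good: "valid_mono N w \<Longrightarrow> Delta N w p \<noteq> 0 \<Longrightarrow> Good N w p"
proof (induction w arbitrary: p)
  case Nil
  then show ?case by (auto simp: tensor_basis H_one_def basis2_def Good_def split: if_splits)
next
  case (Cons g w)
  obtain i u where g: "g = (i,u)" by fastforce
  let ?S = "{p. Delta_gen N g p \<noteq> 0} \<times> {p. Delta N w p \<noteq> 0}"
  have "p \<in> {q. T_mult (Delta_gen N g) (Delta N w) q \<noteq> 0}" using Cons.prems by simp
  then have "p \<in> hcat ` ?S" using T_mult_supp[OF fs_Delta_gen[of N g] fs_Delta[of N w]] by blast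
  then obtain a b where ab: "Delta_gen N g a \<noteq> 0" "Delta N w b \<noteq> 0" "p = hcat (a,b)" by auto
  have ga: "Good N [g] a" using Delta_gen_Good ab(1) Cons.prems g by auto
  have gb: "Good N w b" using Cons ab(2) by auto
  show ?case using ga gb ab(3) by (auto simp: Good_def hcat_def)
qed

lemma Delta_diag: "valid_mono N w \<Longrightarrow> Delta N w (w, []) = 1"
proof (induction w)
  case Nil
  then show ?case by (auto simp: tensor_basis H_one_def basis2_def)
next
  case (Cons g w)
  obtain i u where g: "g = (i,u)" by fastforce
  let ?S = "{p. Delta_gen N g p \<noteq> 0} \<times> {p. Delta N w p \<noteq> 0}"
  have d1: "Delta_gen N g ([g],[]) = 1" using Delta_gen_diag Cons.prems g by auto
  have d2: "Delta N w (w,[]) = 1" using Cons by auto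
  have "{pp\<in>?S. hcat pp = (g # w, [])} = {(([g],[]),(w,[]))}"
  proof (rule set_eqI, rule iffI)
    fix pp assume "pp \<in> {pp\<in>?S. hcat pp = (g # w, [])}"
    then obtain a b c d where pp: "pp = ((a,b),(c,d))" and
      h: "Delta_gen N g (a, b) \<noteq> 0" "Delta N w (c, d) \<noteq> 0" "a @ c = g # w" "b @ d = []"
      by (cases pp) (auto simp: hcat_def)
    have "Good N [g] (a,b)" using Delta_gen_Good h(1) Cons.prems g by auto
    moreover have "Good N w (c,d)" using Delta_Good h(2) Cons.prems by auto
    ultimately show "pp \<in> {(([g],[]::mono),(w,[]::mono))}" using h pp by (auto simp: Good_def)
  next
    fix pp assume "pp \<in> {(([g],[]::mono),(w,[]::mono))}"
    then show "pp \<in> {pp\<in>?S. hcat pp = (g # w, [])}" using d1 d2 by (auto simp: hcat_def)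
  qed
  then show ?case
    by (simp add: T_mult_fiber[OF fs_Delta_gen fs_Delta] d1 d2)
qed

lemma valid_wt_pos: "valid_mono N m \<Longrightarrow> m \<noteq> [] \<Longrightarrow> 0 < wt m"
  by (cases m) (auto simp: valid_gen_def)



definition fS :: "(mono \<Rightarrow> elt) \<Rightarrow> mono \<times> mono \<Rightarrow> elt" where
  "fS S p = H_mult (S (fst p)) (basis (snd p))"

definition leftEq :: "nat \<Rightarrow> (mono \<Rightarrow> elt) \<Rightarrow> bool" where
  "leftEq N S \<longleftrightarrow> (\<forall>w. valid_mono N w \<longrightarrow> LL (Delta N w) (fS S) = H_smult (counit w) H_one)"

lemma LL_Delta_split:
  assumes "valid_mono N w"
  shows "LL (Delta N w) (fS S) = S w + (\<Sum>p\<in>{p. Delta N w p \<noteq> 0} - {(w,[])}. H_smult (Delta N w p) (fS S p))"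
proof -
  have fin: "finite {p. Delta N w p \<noteq> 0}" using fs_Delta by (simp add: fs_def)
  have mem: "(w,[]) \<in> {p. Delta N w p \<noteq> 0}" using Delta_diag[OF assms] by simp
  have "LL (Delta N w) (fS S) = H_smult (Delta N w (w,[])) (fS S (w,[])) +
     (\<Sum>p\<in>{p. Delta N w p \<noteq> 0} - {(w,[])}. H_smult (Delta N w p) (fS S p))"
    unfolding LL_def by (rule sum.remove[OF fin mem])
  then show ?thesis
    using H_mult_one_right[unfolded H_one_def] by (simp add: Delta_diag[OF assms] fS_def)
qed

lemma uniq:
  assumes l1: "leftEq N S1" and l2: "leftEq N S2" and v: "valid_mono N w"
  shows "S1 w = S2 w"
  using v
proof (induction "wt w" arbitrary: w rule: less_induct)
  case less
  have rest: "H_smult (Delta N w p) (fS S1 p) = H_smult (Delta N w p) (fS S2 p)"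
    if p: "p \<in> {p. Delta N w p \<noteq> 0} - {(w,[])}" for p
  proof -
    have G: "Good N w p" using Delta_Good less.prems p by auto
    have "snd p \<noteq> []" using G p by (cases p) (auto simp: Good_def)
    then have "0 < wt (snd p)" using G valid_wt_pos by (auto simp: Good_def)
    then have "wt (fst p) < wt w" using G by (auto simp: Good_def)
    then have "S1 (fst p) = S2 (fst p)" using less.hyps G by (auto simp: Good_def)
    then show ?thesis by (simp add: fS_def)
  qed
  have "S1 w + (\<Sum>p\<in>{p. Delta N w p \<noteq> 0} - {(w,[])}. H_smult (Delta N w p) (fS S1 p))
      = S2 w + (\<Sum>p\<in>{p. Delta N w p \<noteq> 0} - {(w,[])}. H_smult (Delta N w p) (fS S2 p))"
    using l1 l2 less.prems by (simp add: leftEq_def LL_Delta_split[symmetric])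
  moreover have "(\<Sum>p\<in>{p. Delta N w p \<noteq> 0} - {(w,[])}. H_smult (Delta N w p) (fS S1 p))
      = (\<Sum>p\<in>{p. Delta N w p \<noteq> 0} - {(w,[])}. H_smult (Delta N w p) (fS S2 p))"
    using rest by (rule sum.cong[OF refl])
  ultimately show ?case by simp
qed

definition antiS :: "(gen \<Rightarrow> elt) \<Rightarrow> mono \<Rightarrow> elt" where
  "antiS Gt w = H_prod (rev (map Gt w))"

lemma antiS_append: "antiS Gt (a @ b) = H_mult (antiS Gt b) (antiS Gt a)"
  by (simp add: antiS_def H_prod_append)

lemma leftEq_anti:
  assumes key: "\<And>g. valid_gen N g \<Longrightarrow> LL (Delta_gen N g) (fS (antiS Gt)) = 0"
  shows "leftEq N (antiS Gt)"
  unfolding leftEq_def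
proof (intro allI impI)
  fix w assume "valid_mono N w"
  then show "LL (Delta N w) (fS (antiS Gt)) = H_smult (counit w) H_one"
  proof (induction w)
    case Nil
    have "Delta N [] = basis2 ([],[])" by (simp add: H_one_def tensor_basis)
    then show ?case by (simp add: fS_def antiS_def counit_def H_one_def[symmetric])
  next
    case (Cons g w)
    let ?A = "Delta_gen N g" and ?B = "Delta N w" and ?f = "fS (antiS Gt)"
    have eq: "?f (fst p @ fst p', snd p @ snd p') =
        H_mult (antiS Gt (fst p')) (H_mult (?f p) (basis (snd p')))" for p p'
      by (simp add: fS_def antiS_append H_mult_basis[symmetric] H_mult_assoc)
    have "LL (Delta N (g # w)) ?f = (\<Sum>p\<in>{p. ?A p \<noteq> 0}. \<Sum>p'\<in>{p. ?B p \<noteq> 0}.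
           H_smult (?A p * ?B p') (H_mult (antiS Gt (fst p')) (H_mult (?f p) (basis (snd p')))))"
      by (simp add: LL_T_mult[OF fs_Delta_gen fs_Delta] eq)
    also have "\<dots> = (\<Sum>p'\<in>{p. ?B p \<noteq> 0}. \<Sum>p\<in>{p. ?A p \<noteq> 0}.
           H_smult (?A p * ?B p') (H_mult (antiS Gt (fst p')) (H_mult (?f p) (basis (snd p')))))"
      by (rule sum.swap)
    also have "\<dots> = (\<Sum>p'\<in>{p. ?B p \<noteq> 0}. H_smult (?B p')
           (H_mult (antiS Gt (fst p')) (H_mult (LL ?A ?f) (basis (snd p')))))"
      unfolding LL_def H_mult_sum_left H_mult_sum_right H_smult_sum
      by (simp add: H_mult_smult_left H_mult_smult_right H_smult_smult mult.commute)
    also have "\<dots> = 0" using key Cons.prems by simp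
    finally show ?case by (simp add: counit_def)
  qed
qed



lemma leaf_colors_ne[simp]: "leaf_colors t \<noteq> []"
proof (induction t)
  case (Node c ts)
  then show ?case by (cases ts) auto
qed

lemma leaf_colors_ne'[simp]: "[] \<noteq> leaf_colors t"
  using leaf_colors_ne[of t] by metis

lemma color_in: "colors_in N t \<Longrightarrow> color t \<in> {1..N}"
  by (cases t) auto

lemma listset_iff: "xs \<in> listset As \<longleftrightarrow> list_all2 (\<in>) xs As"
proof (induction As arbitrary: xs)
  case Nil then show ?case by simp
next
  case (Cons A As)
  then show ?case by (cases xs) (auto simp: set_Cons_def list_all2_Cons2)
qed

lemma set_Cons_img: "set_Cons A XS = (\<lambda>(x,xs). x # xs) ` (A \<times> XS)"
  by (auto simp: set_Cons_def)

lemma finite_listset: "(\<And>A. A \<in> set As \<Longrightarrow> finite A) \<Longrightarrow> finite (listset As)"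
  by (induction As) (auto simp: set_Cons_img)

lemma sum_listset_prod:
  assumes "\<And>A. A \<in> set As \<Longrightarrow> finite A"
  shows "(\<Sum>xs\<in>listset As. H_prod (rev (map h xs))) = H_prod (rev (map (\<lambda>A. \<Sum>x\<in>A. h x) As))"
  using assms
proof (induction As)
  case Nil then show ?case by simp
next
  case (Cons A As)
  have fin: "finite A" "finite (listset As)" using Cons.prems finite_listset by auto
  have inj: "inj_on (\<lambda>(x,xs). x # xs) (A \<times> listset As)" by (auto simp: inj_on_def)
  have "(\<Sum>xs\<in>listset (A # As). H_prod (rev (map h xs)))
      = (\<Sum>xs\<in>(\<lambda>(x,xs). x # xs) ` (A \<times> listset As). H_prod (rev (map h xs)))"
    unfolding listset.simps set_Cons_img ..
  also have "\<dots> = (\<Sum>p\<in>A \<times> listset As. H_prod (rev (map h (fst p # snd p))))"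
    using sum.reindex[OF inj, of "\<lambda>xs. H_prod (rev (map h xs))"] by (simp add: comp_def split_def)
  also have "\<dots> = (\<Sum>(x,xs)\<in>A \<times> listset As. H_mult (H_prod (rev (map h xs))) (h x))"
    by (simp add: split_def H_prod_append)
  also have "\<dots> = (\<Sum>x\<in>A. \<Sum>xs\<in>listset As. H_mult (H_prod (rev (map h xs))) (h x))"
    by (rule sum.cartesian_product[symmetric])
  also have "\<dots> = H_mult (\<Sum>xs\<in>listset As. H_prod (rev (map h xs))) (\<Sum>x\<in>A. h x)"
    by (simp add: H_mult_sum_left H_mult_sum_right)
  also have "\<dots> = H_prod (rev (map (\<lambda>A. \<Sum>x\<in>A. h x) (A # As)))"
    using Cons by (simp add: H_prod_append)
  finally show ?case .
qed

definition RT' :: "nat \<Rightarrow> gen \<Rightarrow> ctree set" where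
  "RT' N g = RT N (fst g) (snd g)"

lemma listset_RT_iff:
  assumes "length v = length ws"
  shows "ts \<in> listset (map (RT' N) (zip v ws)) \<longleftrightarrow>
    map leaf_colors ts = ws \<and> map color ts = v \<and> (\<forall>t\<in>set ts. reduced t \<and> colors_in N t)"
proof -
  have "ts \<in> listset (map (RT' N) (zip v ws)) \<longleftrightarrow>
     length ts = length ws \<and> (\<forall>k<length ts. ts ! k \<in> RT N (v ! k) (ws ! k))"
    using assms by (auto simp: listset_iff list_all2_conv_all_nth RT'_def)
  also have "\<dots> \<longleftrightarrow> map leaf_colors ts = ws \<and> map color ts = v \<and> (\<forall>t\<in>set ts. reduced t \<and> colors_in N t)"
    using assms by (auto simp: RT_def list_eq_iff_nth_eq all_set_conv_all_nth)
  finally show ?thesis .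
qed

definition W2 :: "nat list \<Rightarrow> nat list list set" where
  "W2 u = {ws\<in>splits u. 2 \<le> length ws}"

definition IX :: "nat \<Rightarrow> nat list \<Rightarrow> (nat list list \<times> nat list) set" where
  "IX N u = Sigma (W2 u) (\<lambda>ws. words N (length ws))"

lemma RT_img:
  assumes u: "2 \<le> length u" and i: "i \<in> {1..N}"
  shows "RT N i u = (\<lambda>(wv,ts). Node i ts) ` Sigma (IX N u) (\<lambda>(ws,v). listset (map (RT' N) (zip v ws)))"
proof (rule set_eqI, rule iffI)
  fix T assume T: "T \<in> RT N i u"
  obtain c ts where Tc: "T = Node c ts" by (cases T)
  have c: "c = i" using T Tc by (simp add: RT_def)
  have ts: "ts \<noteq> []" using T Tc u by (auto simp: RT_def)
  then have l2: "2 \<le> length ts" using T Tc by (auto simp: RT_def)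
  have lc: "concat (map leaf_colors ts) = u" using T Tc ts by (simp add: RT_def)
  have rc: "\<forall>t\<in>set ts. reduced t \<and> colors_in N t" using T Tc by (auto simp: RT_def)
  have "(map leaf_colors ts, map color ts) \<in> IX N u"
    using lc l2 rc leaf_colors_ne color_in
    by (auto simp: IX_def W2_def splits_def words_def)
  moreover have "ts \<in> listset (map (RT' N) (zip (map color ts) (map leaf_colors ts)))"
    using listset_RT_iff rc by simp
  ultimately show "T \<in> (\<lambda>(wv,ts). Node i ts) ` Sigma (IX N u) (\<lambda>(ws,v). listset (map (RT' N) (zip v ws)))"
    using Tc c by (intro image_eqI[of _ _ "((map leaf_colors ts, map color ts), ts)"]) auto
next
  fix T assume "T \<in> (\<lambda>(wv,ts). Node i ts) ` Sigma (IX N u) (\<lambda>(ws,v). listset (map (RT' N) (zip v ws)))"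
  then obtain ws v ts where T: "T = Node i ts" and wv: "(ws,v) \<in> IX N u"
    and ts: "ts \<in> listset (map (RT' N) (zip v ws))" by auto
  have lv: "length v = length ws" using wv by (auto simp: IX_def words_def)
  have props: "map leaf_colors ts = ws" "map color ts = v" "\<forall>t\<in>set ts. reduced t \<and> colors_in N t"
    using ts listset_RT_iff[OF lv] by auto
  have "2 \<le> length ts" using wv props(1) by (auto simp: IX_def W2_def dest: arg_cong[where f=length])
  moreover have "concat ws = u" using wv by (auto simp: IX_def W2_def splits_def)
  ultimately show "T \<in> RT N i u" using T props i by (auto simp: RT_def)
qed

lemma RT_inj:
  "inj_on (\<lambda>(wv,ts). Node i ts) (Sigma (IX N u) (\<lambda>(ws,v). listset (map (RT' N) (zip v ws))))"
proof (rule inj_onI)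
  fix x y
  assume x: "x \<in> Sigma (IX N u) (\<lambda>(ws,v). listset (map (RT' N) (zip v ws)))"
    and y: "y \<in> Sigma (IX N u) (\<lambda>(ws,v). listset (map (RT' N) (zip v ws)))"
    and e: "(\<lambda>(wv,ts). Node i ts) x = (\<lambda>(wv,ts). Node i ts) y"
  obtain ws v ts where xx: "x = ((ws,v),ts)" by (metis prod.collapse)
  obtain ws' v' ts' where yy: "y = ((ws',v'),ts')" by (metis prod.collapse)
  have h: "(ws,v) \<in> IX N u" "ts \<in> listset (map (RT' N) (zip v ws))"
    "(ws',v') \<in> IX N u" "ts' \<in> listset (map (RT' N) (zip v' ws'))" "ts = ts'"
    using x y e xx yy by auto
  moreover have "length v = length ws" "length v' = length ws'"
    using h by (auto simp: IX_def words_def)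
  ultimately have "ws = ws' \<and> v = v'" using listset_RT_iff by metis
  then show "x = y" using xx yy h by simp
qed

lemma W2_lt: "ws \<in> W2 u \<Longrightarrow> w \<in> set ws \<Longrightarrow> length w < length u"
proof -
  assume ws: "ws \<in> W2 u" and w: "w \<in> set ws"
  obtain xs ys where split: "ws = xs @ w # ys" using split_list[OF w] by auto
  have ne: "[] \<notin> set ws" "concat ws = u" "2 \<le> length ws" using ws by (auto simp: W2_def splits_def)
  have "xs @ ys \<noteq> []" using ne(3) split by auto
  then obtain z where z: "z \<in> set (xs @ ys)" by (metis list.set_intros(1) neq_Nil_conv)
  then have "z \<noteq> []" using split ne by auto
  have "length z \<le> length (concat (xs @ ys))" using z by (rule length_mem_concat)
  moreover have "0 < length z" using \<open>z \<noteq> []\<close> by simp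
  ultimately have "0 < length (concat (xs @ ys))" by (rule order.strict_trans2[rotated])
  moreover have "length u = length (concat (xs @ ys)) + length w" using split ne(2) by auto
  ultimately show ?thesis by linarith
qed

lemma finite_IX: "finite (IX N u)"
  unfolding IX_def W2_def using splits_finite words_finite by auto

lemma RT_short: "RT N j [a] = (if j = a \<and> a \<in> {1..N} then {Node a []} else {})"
proof -
  have h: "T = Node a []" if "T \<in> RT N j [a]" for T
  proof -
    obtain c ts where T: "T = Node c ts" by (cases T)
    show ?thesis
    proof (cases "ts = []")
      case True then show ?thesis using that T by (simp add: RT_def)
    next
      case False
      then have "2 \<le> length ts" using that T by (auto simp: RT_def)
      moreover have "[] \<notin> set (map leaf_colors ts)" by auto
      then have "length ts \<le> length (concat (map leaf_colors ts))"
        using length_concat_ge[of "map leaf_colors ts"] by simp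
      ultimately show ?thesis using that T False by (auto simp: RT_def)
    qed
  qed
  have "T \<in> RT N j [a] \<longleftrightarrow> T = Node a [] \<and> j = a \<and> a \<in> {1..N}" for T
  proof
    assume T: "T \<in> RT N j [a]"
    then have "T = Node a []" by (rule h)
    then show "T = Node a [] \<and> j = a \<and> a \<in> {1..N}" using T by (auto simp: RT_def)
  next
    assume "T = Node a [] \<and> j = a \<and> a \<in> {1..N}" then show "T \<in> RT N j [a]" by (auto simp: RT_def)
  qed
  then show ?thesis by auto
qed

lemma RT_Nil: "RT N j [] = {}"
  using leaf_colors_ne by (auto simp: RT_def)

lemma finite_RT: "finite (RT N j u)"
proof (induction "length u" arbitrary: j u rule: less_induct)
  case less
  show ?case
  proof (cases "2 \<le> length u")
    case False
    then consider "u = []" | a where "u = [a]" by (cases u rule: remdups_adj.cases) auto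
    then show ?thesis by cases (auto simp: RT_Nil RT_short)
  next
    case True
    show ?thesis
    proof (cases "j \<in> {1..N}")
      case False
      then have "RT N j u = {}" by (auto simp: RT_def dest: color_in)
      then show ?thesis by simp
    next
      case jN: True
      have "finite (listset (map (RT' N) (zip v ws)))" if "(ws,v) \<in> IX N u" for ws v
      proof (rule finite_listset)
        fix A assume "A \<in> set (map (RT' N) (zip v ws))"
        then obtain a w where "A = RT N a w" "w \<in> set ws" by (auto simp: RT'_def dest: set_zip_rightD)
        moreover have "ws \<in> W2 u" using that by (auto simp: IX_def)
        ultimately show "finite A" using less W2_lt by blast
      qed
      then show ?thesis unfolding RT_img[OF True jN]
        by (intro finite_imageI finite_SigmaI[OF finite_IX]) (auto simp: split_def)
    qed
  qed
qed



definition gtree :: "ctree \<Rightarrow> elt" where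
  "gtree T = H_smult ((-1) ^ nonleaf_count T) (basis (rev (preorder_gens T)))"

definition Gt :: "nat \<Rightarrow> gen \<Rightarrow> elt" where
  "Gt N g = (\<Sum>T\<in>RT' N g. gtree T)"

lemma H_smult_basis_mult: "H_mult (H_smult c (basis a)) (H_smult d (basis b)) = H_smult (c * d) (basis (a @ b))"
  by (simp add: H_mult_smult_left H_mult_smult_right H_smult_smult H_mult_basis mult.commute)

lemma gprod: "H_prod (rev (map gtree ts)) =
   H_smult ((-1) ^ sum_list (map nonleaf_count ts)) (basis (rev (concat (map preorder_gens ts))))"
proof (induction ts)
  case Nil then show ?case by (simp add: H_one_def)
next
  case (Cons t ts)
  have "H_prod (rev (map gtree (t # ts))) = H_mult (H_prod (rev (map gtree ts))) (gtree t)"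
    by (simp add: H_prod_append)
  also have "\<dots> = H_smult ((-1) ^ sum_list (map nonleaf_count (t # ts))) (basis (rev (concat (map preorder_gens (t # ts)))))"
    unfolding Cons gtree_def H_smult_basis_mult by (simp add: power_add mult.commute)
  finally show ?case .
qed

lemma gtree_Node: "ts \<noteq> [] \<Longrightarrow> gtree (Node i ts) =
   H_smult (-1) (H_mult (H_prod (rev (map gtree ts))) (basis [(i, map color ts)]))"
  unfolding gprod H_mult_smult_left H_mult_basis gtree_def
  by (simp add: H_smult_smult)

lemma Gt_rec:
  assumes u: "2 \<le> length u" and i: "i \<in> {1..N}"
  shows "Gt N (i,u) = H_smult (-1) (\<Sum>(ws,v)\<in>IX N u. H_mult (H_prod (rev (map (Gt N) (zip v ws)))) (basis [(i,v)]))"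
proof -
  let ?Sg = "Sigma (IX N u) (\<lambda>(ws,v). listset (map (RT' N) (zip v ws)))"
  have finL: "finite (listset (map (RT' N) (zip v ws)))" for v ws
    by (rule finite_listset) (auto simp: RT'_def finite_RT)
  have "Gt N (i,u) = (\<Sum>x\<in>?Sg. gtree (Node i (snd x)))"
    unfolding Gt_def RT'_def fst_conv snd_conv RT_img[OF u i] sum.reindex[OF RT_inj]
    by (simp add: split_def)
  also have "\<dots> = (\<Sum>(p,ts)\<in>?Sg. gtree (Node i ts))"
    by (simp add: split_def)
  also have "\<dots> = (\<Sum>p\<in>IX N u. \<Sum>ts\<in>(\<lambda>(ws,v). listset (map (RT' N) (zip v ws))) p. gtree (Node i ts))"
    by (rule sum.Sigma[symmetric]) (auto simp: finite_IX finL split_def)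
  also have "\<dots> = (\<Sum>(ws,v)\<in>IX N u. \<Sum>ts\<in>listset (map (RT' N) (zip v ws)). gtree (Node i ts))"
    by (simp add: split_def)
  also have "\<dots> = (\<Sum>(ws,v)\<in>IX N u. \<Sum>ts\<in>listset (map (RT' N) (zip v ws)).
        H_smult (-1) (H_mult (H_prod (rev (map gtree ts))) (basis [(i, v)])))"
  proof (rule sum.cong[OF refl], clarify, rule sum.cong[OF refl])
    fix ws v ts assume wv: "(ws,v) \<in> IX N u" and ts: "ts \<in> listset (map (RT' N) (zip v ws))"
    have lv: "length v = length ws" "2 \<le> length ws" using wv by (auto simp: IX_def W2_def words_def)
    have "map color ts = v" "map leaf_colors ts = ws" using listset_RT_iff[OF lv(1)] ts by auto
    moreover then have "ts \<noteq> []" using lv by auto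
    ultimately show "gtree (Node i ts) = H_smult (-1) (H_mult (H_prod (rev (map gtree ts))) (basis [(i, v)]))"
      by (simp add: gtree_Node)
  qed
  also have "\<dots> = (\<Sum>(ws,v)\<in>IX N u. H_smult (-1) (H_mult (H_prod (rev (map (Gt N) (zip v ws)))) (basis [(i,v)])))"
  proof (rule sum.cong[OF refl], clarify)
    fix ws v
    have "(\<Sum>ts\<in>listset (map (RT' N) (zip v ws)). H_prod (rev (map gtree ts))) =
        H_prod (rev (map (\<lambda>A. \<Sum>x\<in>A. gtree x) (map (RT' N) (zip v ws))))"
      by (rule sum_listset_prod) (auto simp: RT'_def finite_RT)
    also have "map (\<lambda>A. \<Sum>x\<in>A. gtree x) (map (RT' N) (zip v ws)) = map (Gt N) (zip v ws)"
      by (simp add: Gt_def)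
    finally show "(\<Sum>ts\<in>listset (map (RT' N) (zip v ws)). H_smult (-1) (H_mult (H_prod (rev (map gtree ts))) (basis [(i, v)])))
        = H_smult (-1) (H_mult (H_prod (rev (map (Gt N) (zip v ws)))) (basis [(i,v)]))"
      by (simp add: H_smult_sum[symmetric] H_mult_sum_left[symmetric])
  qed
  also have "\<dots> = H_smult (-1) (\<Sum>(ws,v)\<in>IX N u. H_mult (H_prod (rev (map (Gt N) (zip v ws)))) (basis [(i,v)]))"
    by (simp add: H_smult_sum split_def)
  finally show ?thesis .
qed

lemma Gt_short: "Gt N (j,[a]) = (if j = a \<and> a \<in> {1..N} then H_one else 0)"
  by (simp add: Gt_def RT'_def RT_short gtree_def H_one_def)

lemma H_mult_basis_Nil[simp]: "H_mult a (basis []) = a"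
  using H_mult_one_right[of a] by (simp add: H_one_def)

lemma antiS_single: "antiS G [g] = G g"
  by (simp add: antiS_def)

lemma antiS_Cons: "antiS G (g # gs) = H_mult (antiS G gs) (G g)"
  using antiS_append[of G "[g]" gs] by (simp add: antiS_single)

lemma antiS_filter:
  assumes "\<forall>g\<in>set gs. snd g \<noteq> [] \<and> set (snd g) \<subseteq> {1..N}"
  shows "antiS (Gt N) gs = (if cnd gs then antiS (Gt N) (filter long gs) else 0)"
  using assms
proof (induction gs)
  case Nil then show ?case by (simp add: cnd_def)
next
  case (Cons g gs)
  obtain j w where g: "g = (j,w)" by fastforce
  show ?case
  proof (cases "long g")
    case True
    then show ?thesis using Cons by (auto simp: antiS_Cons cnd_def)
  next
    case False
    then obtain a where w: "w = [a]" using Cons.prems g by (cases w rule: remdups_adj.cases) (auto simp: long_def)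
    have a: "a \<in> {1..N}" using Cons.prems g w by auto
    show ?thesis using Cons False g w a by (auto simp: antiS_Cons cnd_def Gt_short)
  qed
qed

lemma LL_tm: "LL (tm i ws v) f = (if cnd (zip v ws) \<and> (long (i,v) \<or> v = [i]) then
   f (filter long (zip v ws), if long (i,v) then [(i,v)] else []) else 0)"
  by (auto simp: tm_alt)

lemma term_eq:
  assumes ws: "ws \<in> splits u" and v: "v \<in> words N (length ws)" and uN: "set u \<subseteq> {1..N}"
  shows "LL (tm i ws v) (fS (antiS (Gt N))) = (if long (i,v) \<or> v = [i] then
     H_mult (antiS (Gt N) (zip v ws)) (basis (if long (i,v) then [(i,v)] else [])) else 0)"
proof -
  have "\<forall>g\<in>set (zip v ws). snd g \<noteq> [] \<and> set (snd g) \<subseteq> {1..N}"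
  proof
    fix g assume "g \<in> set (zip v ws)"
    then have "snd g \<in> set ws" by (metis prod.collapse set_zip_rightD)
    moreover have "concat ws = u" "[] \<notin> set ws" using ws by (auto simp: splits_def)
    ultimately have "set (snd g) \<subseteq> set u" "snd g \<noteq> []" by auto
    then show "snd g \<noteq> [] \<and> set (snd g) \<subseteq> {1..N}" using uN by blast
  qed
  note af = antiS_filter[OF this]
  show ?thesis unfolding LL_tm fS_def by (auto simp: af)
qed



lemma key:
  assumes g: "valid_gen N g"
  shows "LL (Delta_gen N g) (fS (antiS (Gt N))) = 0"
proof -
  obtain i u where gg: "g = (i,u)" by fastforce
  have gi: "i \<in> {1..N}" "2 \<le> length u" "set u \<subseteq> {1..N}" using g gg by (auto simp: valid_gen_def)
  let ?f = "fS (antiS (Gt N))"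
  let ?T = "\<lambda>ws. \<Sum>v\<in>words N (length ws). LL (tm i ws v) ?f"
  have "LL (Delta_gen N g) ?f = (\<Sum>ws\<in>splits u. LL (\<Sum>v\<in>words N (length ws). tm i ws v) ?f)"
    unfolding gg Delta_gen_alt
    by (rule LL_sum[OF splits_finite]) (rule fs_sum[OF words_finite], simp)
  also have "\<dots> = (\<Sum>ws\<in>splits u. ?T ws)"
    by (rule sum.cong[OF refl]) (rule LL_sum[OF words_finite], simp)
  moreover have spl: "splits u = insert [u] (W2 u)"
  proof -
    have "ws = [u]" if "ws \<in> splits u" "\<not> 2 \<le> length ws" for ws
    proof -
      have "length ws < 2" using that(2) by simp
      then have "ws = [] \<or> (\<exists>w. ws = [w])" by (cases ws) auto
      then show ?thesis using that(1) gi(2) by (auto simp: splits_def)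
    qed
    moreover have "[u] \<in> splits u" using gi by (auto simp: splits_def)
    ultimately show ?thesis unfolding W2_def by blast
  qed
  ultimately have "LL (Delta_gen N g) ?f = (\<Sum>ws\<in>insert [u] (W2 u). ?T ws)" by simp
  also have "(\<Sum>ws\<in>insert [u] (W2 u). ?T ws) = ?T [u] + (\<Sum>ws\<in>W2 u. ?T ws)"
    by (rule sum.insert) (auto simp: W2_def splits_finite)
  also have "?T [u] = Gt N (i,u)"
  proof -
    have "?T [u] = (\<Sum>v\<in>words N 1. if v = [i] then Gt N (i,u) else 0)"
    proof (rule sum.cong)
      fix v assume v0: "v \<in> words N 1"
      then have v: "v \<in> words N (length [u])" by simp
      then have "length v = 1" by (simp add: words_def)
      then obtain j where vj: "v = [j]" by (cases v) auto
      have "[u] \<in> splits u" using gi by (auto simp: splits_def)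
      then show "LL (tm i [u] v) ?f = (if v = [i] then Gt N (i,u) else 0)"
        using term_eq[OF _ v gi(3)] vj by (auto simp: long_def antiS_single)
    qed simp
    also have "\<dots> = Gt N (i,u)" using gi by (simp add: words_finite) (simp add: words_def)
    finally show ?thesis .
  qed
  also have "(\<Sum>ws\<in>W2 u. ?T ws) = (\<Sum>(ws,v)\<in>IX N u. H_mult (H_prod (rev (map (Gt N) (zip v ws)))) (basis [(i,v)]))"
    unfolding IX_def
  proof (subst sum.Sigma[symmetric])
    show "finite (W2 u)" by (auto simp: W2_def splits_finite)
    show "\<forall>ws\<in>W2 u. finite (words N (length ws))" by (simp add: words_finite)
    show "(\<Sum>ws\<in>W2 u. ?T ws) = (\<Sum>ws\<in>W2 u. \<Sum>v\<in>words N (length ws). H_mult (H_prod (rev (map (Gt N) (zip v ws)))) (basis [(i, v)]))"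
    proof (rule sum.cong[OF refl], rule sum.cong[OF refl])
      fix ws v assume ws: "ws \<in> W2 u" and v: "v \<in> words N (length ws)"
      have "long (i,v)" using ws v by (auto simp: W2_def words_def long_def)
      then show "LL (tm i ws v) ?f = H_mult (H_prod (rev (map (Gt N) (zip v ws)))) (basis [(i, v)])"
        using term_eq[OF _ v gi(3)] ws by (auto simp: W2_def antiS_def)
    qed
  qed
  finally show ?thesis
    unfolding Gt_rec[OF gi(2) gi(1)] by (simp add: H_smult_def fun_eq_iff)
qed



lemma reduced_long: "reduced T \<Longrightarrow> \<forall>g\<in>set (preorder_gens T). long g"
proof (induction T)
  case (Node c ts)
  then show ?case by (auto simp: long_def)
qed

lemma Lambda_basis: "reduced T \<Longrightarrow> Lambda_down T = basis (preorder_gens T)"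
proof -
  assume r: "reduced T"
  then have l: "\<forall>g\<in>set (preorder_gens T). long g" by (rule reduced_long)
  then have "cnd (preorder_gens T)" by (auto simp: cnd_def)
  moreover have "filter long (preorder_gens T) = preorder_gens T" using l by simp
  ultimately show ?thesis by (simp add: Lambda_down_def HY)
qed

lemma tmap_basis: "tmap (basis m) = basis (rev m)"
  by (auto simp: tmap_def basis_def fun_eq_iff)

lemma tmap_sum: "tmap (\<Sum>k\<in>K. F k) = (\<Sum>k\<in>K. tmap (F k))"
  by (auto simp: tmap_def fun_eq_iff sum_fun_apply)

lemma tmap_smult: "tmap (H_smult c a) = H_smult c (tmap a)"
  by (auto simp: tmap_def H_smult_def)

lemma linext_basis: "linext S (basis m) = S m"
proof -
  have "{w. basis m w \<noteq> 0} = {m}" by (auto simp: basis_def)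
  then show ?thesis by (auto simp: linext_def basis_def fun_eq_iff)
qed

theorem corollary4:
  fixes N i :: nat and u :: "nat list" and S :: "mono \<Rightarrow> elt"
  assumes "N \<ge> 1" and "i \<in> {1..N}" and "set u \<subseteq> {1..N}" and "length u \<ge> 2"
    and "is_antipode_H N S"
  shows "antipode_R S (Y (i, u)) =
         (\<Sum>T\<in>RT N i u. H_smult ((-1) ^ nonleaf_count T) (Lambda_down T))"
proof -
  have lS: "leftEq N S"
    using assms(5) unfolding is_antipode_H_def leftEq_def LL_def fS_def by blast
  have lG: "leftEq N (antiS (Gt N))"
    by (rule leftEq_anti) (rule key)
  have vg: "valid_mono N [(i,u)]" using assms by (simp add: valid_gen_def)
  have "S [(i,u)] = antiS (Gt N) [(i,u)]" by (rule uniq[OF lS lG vg])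
  also have "\<dots> = Gt N (i,u)" by (rule antiS_single)
  finally have Su: "S [(i,u)] = Gt N (i,u)" .
  have "antipode_R S (Y (i, u)) = tmap (S [(i,u)])"
    using assms(4) by (simp add: antipode_R_def Y_def tmap_basis linext_basis)
  also have "\<dots> = (\<Sum>T\<in>RT N i u. H_smult ((-1) ^ nonleaf_count T) (basis (preorder_gens T)))"
    unfolding Su Gt_def RT'_def fst_conv snd_conv tmap_sum gtree_def tmap_smult tmap_basis by simp
  also have "\<dots> = (\<Sum>T\<in>RT N i u. H_smult ((-1) ^ nonleaf_count T) (Lambda_down T))"
    by (rule sum.cong[OF refl]) (simp add: RT_def Lambda_basis)
  finally show ?thesis .
qed

end
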